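(* Let $n\ge 1$. The totally nonnegative complete flag variety $\mathrm{Fl}_n^{\geq 0}$ equals the set $\{F\in \mathrm{Fl}_n \mid P_I(F)\geq 0 \text{ for all } I\subseteq [n]\}$, i.e. a complete flag $F$ lies in $\mathrm{Fl}_n^{\ge 0}$ if and only if it has a representing matrix all of whose flag minors are nonnegative.
   Context: $\mathrm{Fl}_n$ is the real complete flag variety: the set of chains $\{0\}=V_0\subsetneq V_1\subsetneq\cdots\subsetneq V_n=\mathbb{R}^n$ of linear subspaces. A flag is represented by an invertible real $n\times n$ matrix $M$ such that $V_i$ is the span of the top $i$ rows of $M$; two matrices represent the same flag iff they differ by left multiplication by an invertible lower triangular matrix. For $I\subseteq[n]$, the Plücker coordinate (flag minor) $P_I(M)$ is the determinant of the submatrix of $M$ in rows $1,\dots,|I|$ and columns $I$; for a flag $F$, $(P_I(F))_I$ is defined up to a positive or negative rescaling of each group $\{P_I: |I|=k\}$, and "$P_I(F)\ge 0$ for all $I$" means that some representing matrix $M$ of $F$ has $P_I(M)\ge 0$ for all $I\subseteq[n]$. A real matrix is totally positive if all its minors are positive. $\mathrm{Fl}_n^{>0}$ is the set of flags having a totally positive representing matrix, and $\mathrm{Fl}_n^{\geq 0}$ is the closure of $\mathrm{Fl}_n^{>0}$ in $\mathrm{Fl}_n$ in the Euclidean topology. *)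

theory Defs
  imports "HOL-Analysis.Analysis"
begin

text \<open>Real n x n matrices are encoded as functions nat => nat => real that vanish
outside the index range {0..<n} x {0..<n} (rows/columns are 0-based, so the paper's
row i is our row i-1). The function space carries the product topology, which on these
matrices is the Euclidean topology.\<close>

definition sqmats :: "nat \<Rightarrow> (nat \<Rightarrow> nat \<Rightarrow> real) set" where
  "sqmats n = {M. \<forall>i j. (n \<le> i \<or> n \<le> j) \<longrightarrow> M i j = 0}"

definition detk :: "nat \<Rightarrow> (nat \<Rightarrow> nat \<Rightarrow> real) \<Rightarrow> real" where
  "detk k A = (\<Sum>p\<in>{p. p permutes {..<k}}. of_int (sign p) * (\<Prod>i<k. A i (p i)))"

definition minor :: "(nat \<Rightarrow> nat \<Rightarrow> real) \<Rightarrow> nat set \<Rightarrow> nat set \<Rightarrow> real" where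
  "minor M R C = detk (card R)
     (\<lambda>i j. M (sorted_list_of_set R ! i) (sorted_list_of_set C ! j))"

definition GLn :: "nat \<Rightarrow> (nat \<Rightarrow> nat \<Rightarrow> real) set" where
  "GLn n = {M \<in> sqmats n. detk n M \<noteq> 0}"

definition flag_minor :: "(nat \<Rightarrow> nat \<Rightarrow> real) \<Rightarrow> nat set \<Rightarrow> real" where
  "flag_minor M I = minor M {..<card I} I"

definition totally_positive :: "nat \<Rightarrow> (nat \<Rightarrow> nat \<Rightarrow> real) \<Rightarrow> bool" where
  "totally_positive n M \<longleftrightarrow>
     (\<forall>R C. R \<subseteq> {..<n} \<and> C \<subseteq> {..<n} \<and> R \<noteq> {} \<and> card R = card C \<longrightarrow> minor M R C > 0)"

definition flag_of :: "nat \<Rightarrow> (nat \<Rightarrow> nat \<Rightarrow> real) \<Rightarrow> nat \<Rightarrow> (nat \<Rightarrow> real) set" where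
  "flag_of n M = (\<lambda>k. if k \<le> n then {v. \<exists>c. v = (\<lambda>j. \<Sum>i<k. c i * M i j)} else {})"

definition Fl :: "nat \<Rightarrow> (nat \<Rightarrow> (nat \<Rightarrow> real) set) set" where
  "Fl n = flag_of n ` GLn n"

text \<open>Euclidean topology on Fl_n: the quotient topology induced by GL_n -> Fl_n.\<close>
definition Fl_topology :: "nat \<Rightarrow> (nat \<Rightarrow> (nat \<Rightarrow> real) set) topology" where
  "Fl_topology n = topology (\<lambda>U. U \<subseteq> Fl n \<and>
       openin (top_of_set (GLn n)) {M \<in> GLn n. flag_of n M \<in> U})"

definition Fl_pos :: "nat \<Rightarrow> (nat \<Rightarrow> (nat \<Rightarrow> real) set) set" where
  "Fl_pos n = flag_of n ` {M \<in> GLn n. totally_positive n M}"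

definition Fl_nonneg :: "nat \<Rightarrow> (nat \<Rightarrow> (nat \<Rightarrow> real) set) set" where
  "Fl_nonneg n = (Fl_topology n) closure_of (Fl_pos n)"

end

theory Submission
  imports Defs Jordan_Normal_Form.Determinant
begin

abbreviation jm :: "nat \<Rightarrow> (nat \<Rightarrow> nat \<Rightarrow> real) \<Rightarrow> real mat" where
  "jm k A \<equiv> Matrix.mat k k (\<lambda>(i,j). A i j)"

lemma detk_jnf: "detk k A = Determinant.det (jm k A)"
  unfolding detk_def Determinant.det_def
  by (auto simp: atLeast0LessThan intro!: sum.cong prod.cong)

lemma detk_cong: "(\<And>i j. i < k \<Longrightarrow> j < k \<Longrightarrow> A i j = B i j) \<Longrightarrow> detk k A = detk k B"
  unfolding detk_def
  by (intro sum.cong refl prod.cong arg_cong2[where f="(*)"]) (auto dest: permutes_in_image)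

lemma detk_0[simp]: "detk 0 A = 1"
  unfolding detk_def by simp

lemma detk_identical_rows:
  assumes "i < k" "j < k" "i \<noteq> j" "\<And>c. c < k \<Longrightarrow> A i c = A j c"
  shows "detk k A = 0"
  unfolding detk_jnf
  by (rule det_identical_rows[of _ k i j]) (use assms in \<open>auto intro!: eq_vecI\<close>)

lemma detk_permute_rows:
  assumes "p permutes {..<k}"
  shows "detk k (\<lambda>i j. A (p i) j) = of_int (sign p) * detk k A"
proof -
  have p: "p permutes {0..<k}" using assms by (simp add: atLeast0LessThan)
  have "jm k (\<lambda>i j. A (p i) j) = Matrix.mat k k (\<lambda>(i,j). jm k A $$ (p i, j))"
    by (rule eq_matI) (use p in \<open>auto dest: permutes_in_image\<close>)
  then show ?thesis unfolding detk_jnf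
    using det_permute_rows[OF _ p, of "jm k A"] by simp
qed

lemma detk_mult:
  "detk k (\<lambda>i j. \<Sum>l<k. A i l * B l j) = detk k A * detk k B"
proof -
  have "jm k (\<lambda>i j. \<Sum>l<k. A i l * B l j) = jm k A * jm k B"
    by (rule eq_matI) (auto simp: scalar_prod_def atLeast0LessThan intro!: sum.cong)
  then show ?thesis unfolding detk_jnf using det_mult[of "jm k A" k "jm k B"] by simp
qed

lemma detk_lower_triangular:
  assumes "\<And>i j. i < j \<Longrightarrow> j < k \<Longrightarrow> A i j = 0"
  shows "detk k A = (\<Prod>i<k. A i i)"
proof -
  have "detk k A = prod_list (diag_mat (jm k A))"
    unfolding detk_jnf by (rule det_lower_triangular[where n=k]) (use assms in auto)
  also have "\<dots> = (\<Prod>i<k. A i i)"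
    unfolding diag_mat_def
    by (simp add: prod.list_conv_set_nth atLeast0LessThan lessThan_def)
  finally show ?thesis .
qed

lemma detk_inverse:
  assumes "detk k A \<noteq> 0"
  obtains B where "\<And>i j. i < k \<Longrightarrow> j < k \<Longrightarrow> (\<Sum>l<k. A i l * B l j) = (if i = j then 1 else 0)"
    "\<And>i j. i < k \<Longrightarrow> j < k \<Longrightarrow> (\<Sum>l<k. B i l * A l j) = (if i = j then 1 else 0)"
proof -
  have "jm k A \<in> Units (ring_mat TYPE(real) k undefined)"
    by (rule det_non_zero_imp_unit) (use assms in \<open>auto simp: detk_jnf\<close>)
  then obtain B where B: "B \<in> carrier_mat k k" "B * jm k A = 1\<^sub>m k" "jm k A * B = 1\<^sub>m k"
    unfolding Units_def by (auto simp: ring_mat_simps)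
  show ?thesis
  proof (rule that[of "\<lambda>i j. B $$ (i,j)"])
    fix i j assume ij: "i < k" "j < k"
    have "(\<Sum>l<k. A i l * B $$ (l, j)) = (jm k A * B) $$ (i,j)"
      using ij B(1) by (simp add: scalar_prod_def atLeast0LessThan)
    also have "\<dots> = (1\<^sub>m k) $$ (i,j)" using B by simp
    finally show "(\<Sum>l<k. A i l * B $$ (l, j)) = (if i = j then 1 else 0)"
      using ij by simp
    have "(\<Sum>l<k. B $$ (i, l) * A l j) = (B * jm k A) $$ (i,j)"
      using ij B(1) by (simp add: scalar_prod_def atLeast0LessThan)
    also have "\<dots> = (1\<^sub>m k) $$ (i,j)" using B by simp
    finally show "(\<Sum>l<k. B $$ (i, l) * A l j) = (if i = j then 1 else 0)"
      using ij by simp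
  qed
qed

abbreviation sl :: "nat set \<Rightarrow> nat list" where "sl J \<equiv> sorted_list_of_set J"

lemma detk_expand_rows:
  fixes A B :: "nat \<Rightarrow> nat \<Rightarrow> real"
  shows "detk k (\<lambda>i j. \<Sum>l<n. A i l * B l j) =
   (\<Sum>f\<in>PiE {..<k} (\<lambda>_. {..<n}). (\<Prod>i<k. A i (f i)) * detk k (\<lambda>i j. B (f i) j))"
proof -
  let ?F = "PiE {..<k} (\<lambda>_. {..<n})"
  have ps: "(\<Prod>i<k. \<Sum>l<n. h i l) = (\<Sum>f\<in>?F. \<Prod>i<k. h i (f i))" for h :: "nat \<Rightarrow> nat \<Rightarrow> real"
    by (rule prod_sum_PiE) auto
  have "detk k (\<lambda>i j. \<Sum>l<n. A i l * B l j) =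
     (\<Sum>p\<in>{p. p permutes {..<k}}. of_int (sign p) * (\<Sum>f\<in>?F. \<Prod>i<k. A i (f i) * B (f i) (p i)))"
    unfolding detk_def by (simp only: ps)
  also have "\<dots> = (\<Sum>p\<in>{p. p permutes {..<k}}. \<Sum>f\<in>?F. (\<Prod>i<k. A i (f i)) * (of_int (sign p) * (\<Prod>i<k. B (f i) (p i))))"
    by (simp add: sum_distrib_left prod.distrib mult_ac)
  also have "\<dots> = (\<Sum>f\<in>?F. \<Sum>p\<in>{p. p permutes {..<k}}. (\<Prod>i<k. A i (f i)) * (of_int (sign p) * (\<Prod>i<k. B (f i) (p i))))"
    by (rule sum.swap)
  also have "\<dots> = (\<Sum>f\<in>?F. (\<Prod>i<k. A i (f i)) * detk k (\<lambda>i j. B (f i) j))"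
    unfolding detk_def by (simp add: sum_distrib_left)
  finally show ?thesis .
qed

lemma sl_facts:
  assumes "finite J"
  shows "distinct (sl J)" "set (sl J) = J" "length (sl J) = card J"
    "bij_betw ((!) (sl J)) {..<card J} J"
  using assms by (auto intro!: bij_betw_nth)

lemma cauchy_binet:
  fixes A B :: "nat \<Rightarrow> nat \<Rightarrow> real"
  shows "detk k (\<lambda>i j. \<Sum>l<n. A i l * B l j) =
    (\<Sum>J\<in>{J. J \<subseteq> {..<n} \<and> card J = k}.
        detk k (\<lambda>i j. A i (sl J ! j)) * detk k (\<lambda>i j. B (sl J ! i) j))"
proof -
  let ?F = "PiE {..<k} (\<lambda>_. {..<n})"
  let ?g = "\<lambda>f. (\<Prod>i<k. A i (f i)) * detk k (\<lambda>i j. B (f i) j)"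
  let ?Fi = "{f\<in>?F. inj_on f {..<k}}"
  let ?Js = "{J. J \<subseteq> {..<n} \<and> card J = k}"
  let ?P = "Sigma ?Js (\<lambda>J. {\<tau>. \<tau> permutes {..<k}})"
  define \<phi> where "\<phi> = (\<lambda>(J,\<tau>). restrict (\<lambda>i. sl J ! \<tau> i) {..<k})"
  have finF: "finite ?F" by (simp add: finite_PiE)
  have finJs: "finite ?Js"
    by (rule finite_subset[of _ "Pow {..<n}"]) auto
  have zero: "?g f = 0" if "f \<in> ?F - ?Fi" for f
  proof -
    from that obtain i j where ij: "i < k" "j < k" "i \<noteq> j" "f i = f j"
      unfolding inj_on_def by auto
    have "detk k (\<lambda>i j. B (f i) j) = 0"
      by (rule detk_identical_rows[OF ij(1-3)]) (use ij in simp)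
    then show ?thesis by simp
  qed
  have "(\<Sum>f\<in>?F. ?g f) = (\<Sum>f\<in>?Fi. ?g f)"
    by (rule sum.mono_neutral_right) (use finF zero in auto)
  also have "\<dots> = (\<Sum>x\<in>?P. ?g (\<phi> x))"
  proof (rule sum.reindex_cong[where l=\<phi>])
    show "inj_on \<phi> ?P"
    proof (rule inj_onI)
      fix x y assume x: "x \<in> ?P" and y: "y \<in> ?P" and exy: "\<phi> x = \<phi> y"
      obtain J \<tau> where xx: "x = (J,\<tau>)" by (cases x)
      obtain J' \<tau>' where yy: "y = (J',\<tau>')" by (cases y)
      have J: "J \<subseteq> {..<n}" "card J = k" and J': "J' \<subseteq> {..<n}" "card J' = k"
        and t: "\<tau> permutes {..<k}" and t': "\<tau>' permutes {..<k}"
        and eq: "\<phi> (J, \<tau>) = \<phi> (J', \<tau>')" using x y exy xx yy by auto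
      have fJ: "finite J" "finite J'" using J J' finite_subset by auto
      have img: "\<phi> (J,\<tau>) ` {..<k} = J" if "J \<subseteq> {..<n}" "card J = k" "\<tau> permutes {..<k}" for J \<tau>
      proof -
        have "\<phi> (J,\<tau>) ` {..<k} = (!) (sl J) ` (\<tau> ` {..<k})"
          unfolding \<phi>_def by (auto simp: image_iff)
        also have "\<tau> ` {..<k} = {..<k}" using that(3) by (simp add: permutes_image)
        also have "(!) (sl J) ` {..<k} = J"
          using sl_facts(4)[of J] that finite_subset[OF that(1)] by (auto simp: bij_betw_def)
        finally show ?thesis .
      qed
      have JJ: "J = J'" using img[OF J t] img[OF J' t'] eq by simp
      have "\<tau> i = \<tau>' i" for i
      proof (cases "i < k")
        case True
        have "sl J ! \<tau> i = sl J ! \<tau>' i"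
          using fun_cong[OF eq, of i] True JJ unfolding \<phi>_def by simp
        moreover have "\<tau> i < k" "\<tau>' i < k" using True t t' by (auto dest: permutes_in_image)
        ultimately show ?thesis
          using nth_eq_iff_index_eq[OF sl_facts(1)[OF fJ(1)]] sl_facts(3)[OF fJ(1)] J by auto
      next
        case False
        then show ?thesis using t t' by (simp add: permutes_not_in)
      qed
      then show "x = y" using JJ xx yy by auto
    qed
    show "?Fi = \<phi> ` ?P"
    proof (rule sym, rule equalityI)
      show "\<phi> ` ?P \<subseteq> ?Fi"
      proof (rule image_subsetI)
        fix x assume x: "x \<in> ?P"
        obtain J \<tau> where xx: "x = (J,\<tau>)" by (cases x)
        have J: "J \<subseteq> {..<n}" "card (J) = k" and t: "\<tau> permutes {..<k}" using x xx by auto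
        have fJ: "finite J" using J finite_subset by auto
        have mem: "sl J ! \<tau> i \<in> J" if "i < k" for i
        proof -
          have "\<tau> i < k" using t that by (auto dest: permutes_in_image)
          then have "sl J ! \<tau> i \<in> set (sl J)" using sl_facts(3)[OF fJ] J by (intro nth_mem) simp
          then show ?thesis using sl_facts(2)[OF fJ] by simp
        qed
        show "\<phi> x \<in> ?Fi" unfolding xx mem_Collect_eq
        proof
          show "\<phi> (J, \<tau>) \<in> ?F" unfolding \<phi>_def using mem J by auto
          show "inj_on (\<phi> (J, \<tau>)) {..<k}"
          proof (rule inj_onI)
            fix x y assume xy: "x \<in> {..<k}" "y \<in> {..<k}" "\<phi> (J, \<tau>) x = \<phi> (J, \<tau>) y"
            then have "sl J ! \<tau> x = sl J ! \<tau> y" unfolding \<phi>_def by simp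
            moreover have "\<tau> x < k" "\<tau> y < k" using xy t by (auto dest: permutes_in_image)
            ultimately have "\<tau> x = \<tau> y"
              using nth_eq_iff_index_eq[OF sl_facts(1)[OF fJ]] sl_facts(3)[OF fJ] J by auto
            then show "x = y" using t by (metis permutes_inj injD)
          qed
        qed
      qed
      show "?Fi \<subseteq> \<phi> ` ?P"
      proof
        fix f assume f: "f \<in> ?Fi"
        define J where "J = f ` {..<k}"
        have J: "J \<subseteq> {..<n}" "card J = k" using f unfolding J_def
          by (auto simp: card_image)
        have fJ: "finite J" using J finite_subset by auto
        have bn: "bij_betw ((!) (sl J)) {..<k} J" using sl_facts(4)[OF fJ] J by simp
        define \<tau> where "\<tau> = (\<lambda>i. if i < k then inv_into {..<k} ((!) (sl J)) (f i) else i)"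
        have bf: "bij_betw f {..<k} J" using f unfolding J_def by (auto simp: bij_betw_def)
        have "bij_betw (inv_into {..<k} ((!) (sl J)) \<circ> f) {..<k} {..<k}"
          by (rule bij_betw_trans[OF bf bij_betw_inv_into[OF bn]])
        then have "bij_betw \<tau> {..<k} {..<k}"
          by (rule bij_betw_cong[THEN iffD1, rotated]) (auto simp: \<tau>_def)
        then have t: "\<tau> permutes {..<k}"
          by (rule bij_imp_permutes) (auto simp: \<tau>_def)
        have "\<phi> (J, \<tau>) = f"
        proof
          fix i show "\<phi> (J, \<tau>) i = f i"
          proof (cases "i < k")
            case True
            have fi: "f i \<in> J" unfolding J_def using True by blast
            have "sl J ! inv_into {..<k} ((!) (sl J)) (f i) = f i"
              by (rule f_inv_into_f) (use bn fi in \<open>simp add: bij_betw_def\<close>)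
            then show ?thesis using True unfolding \<phi>_def \<tau>_def by simp
          next
            case False
            have "f i = undefined" using f False by (intro PiE_arb[of f "{..<k}" "\<lambda>_. {..<n}"]) auto
            then show ?thesis using False unfolding \<phi>_def by simp
          qed
        qed
        then show "f \<in> \<phi> ` ?P" using J t by (auto intro!: image_eqI[where x="(J,\<tau>)"])
      qed
    qed
  qed simp
  also have "\<dots> = (\<Sum>J\<in>?Js. \<Sum>\<tau>\<in>{\<tau>. \<tau> permutes {..<k}}. ?g (\<phi> (J,\<tau>)))"
    by (subst sum.Sigma) (use finJs in \<open>auto simp: finite_permutations\<close>)
  also have "\<dots> = (\<Sum>J\<in>?Js. detk k (\<lambda>i j. A i (sl J ! j)) * detk k (\<lambda>i j. B (sl J ! i) j))"
  proof (rule sum.cong[OF refl])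
    fix J assume J: "J \<in> ?Js"
    have "?g (\<phi> (J,\<tau>)) = (of_int (sign \<tau>) * (\<Prod>i<k. A i (sl J ! \<tau> i))) * detk k (\<lambda>i j. B (sl J ! i) j)"
      if t: "\<tau> permutes {..<k}" for \<tau>
    proof -
      have "(\<Prod>i<k. A i (\<phi> (J,\<tau>) i)) = (\<Prod>i<k. A i (sl J ! \<tau> i))"
        unfolding \<phi>_def by simp
      moreover have "detk k (\<lambda>i j. B (\<phi> (J,\<tau>) i) j) = detk k (\<lambda>i j. B (sl J ! \<tau> i) j)"
        by (rule detk_cong) (simp add: \<phi>_def)
      moreover have "detk k (\<lambda>i j. B (sl J ! \<tau> i) j) = of_int (sign \<tau>) * detk k (\<lambda>i j. B (sl J ! i) j)"
        using detk_permute_rows[OF t, of "\<lambda>i j. B (sl J ! i) j"] by simp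
      ultimately show ?thesis by simp
    qed
    then have "(\<Sum>\<tau>\<in>{\<tau>. \<tau> permutes {..<k}}. ?g (\<phi> (J,\<tau>))) =
       (\<Sum>\<tau>\<in>{\<tau>. \<tau> permutes {..<k}}. (of_int (sign \<tau>) * (\<Prod>i<k. A i (sl J ! \<tau> i))) * detk k (\<lambda>i j. B (sl J ! i) j))"
      by (intro sum.cong) auto
    also have "\<dots> = detk k (\<lambda>i j. A i (sl J ! j)) * detk k (\<lambda>i j. B (sl J ! i) j)"
      unfolding detk_def by (simp add: sum_distrib_right)
    finally show "(\<Sum>\<tau>\<in>{\<tau>. \<tau> permutes {..<k}}. ?g (\<phi> (J,\<tau>))) = detk k (\<lambda>i j. A i (sl J ! j)) * detk k (\<lambda>i j. B (sl J ! i) j)" .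
  qed
  finally show ?thesis using detk_expand_rows by simp
qed

lemma dominance:
  fixes c :: "'a \<Rightarrow> real" and e :: "'a \<Rightarrow> nat"
  assumes fin: "finite S" and ge: "\<And>x. x \<in> S \<Longrightarrow> c x \<noteq> 0 \<Longrightarrow> e0 \<le> e x"
    and pos: "0 < (\<Sum>x\<in>{x\<in>S. e x = e0}. c x)"
  shows "eventually (\<lambda>t. 0 < (\<Sum>x\<in>S. c x * t ^ e x)) (at_right 0)"
proof -
  define f where "f = (\<lambda>t::real. \<Sum>x\<in>S. c x * t ^ (e x - e0))"
  have cont: "continuous_on UNIV f" unfolding f_def by (intro continuous_intros)
  have f0: "f 0 = (\<Sum>x\<in>{x\<in>S. e x = e0}. c x)"
  proof -
    have "f 0 = (\<Sum>x\<in>S. if e x = e0 then c x else 0)"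
      unfolding f_def
    proof (rule sum.cong[OF refl])
      fix x assume "x \<in> S"
      then show "c x * 0 ^ (e x - e0) = (if e x = e0 then c x else 0)"
        by (cases "c x = 0") (use ge[of x] in \<open>auto simp: power_0_left\<close>)
    qed
    also have "\<dots> = (\<Sum>x\<in>{x\<in>S. e x = e0}. c x)"
      using fin by (simp add: sum.inter_filter)
    finally show ?thesis .
  qed
  have "(f \<longlongrightarrow> f 0) (at_right 0)"
    using cont by (metis continuous_on_def UNIV_I tendsto_mono at_le subset_UNIV)
  then have ev: "eventually (\<lambda>t. 0 < f t) (at_right 0)"
    using pos f0 by (intro order_tendstoD(1)) auto
  show ?thesis
    using ev eventually_at_right_less[of "0::real"]
  proof eventually_elim
    case (elim t)
    have "(\<Sum>x\<in>S. c x * t ^ e x) = t ^ e0 * f t"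
      unfolding f_def sum_distrib_left
    proof (rule sum.cong[OF refl])
      fix x assume x: "x \<in> S"
      show "c x * t ^ e x = t ^ e0 * (c x * t ^ (e x - e0))"
      proof (cases "c x = 0")
        case False
        then have "e x = e0 + (e x - e0)" using ge[OF x] by simp
        then have "t ^ e x = t ^ e0 * t ^ (e x - e0)" by (metis power_add)
        then show ?thesis using False by simp
      qed simp
    qed
    then show ?case using elim by simp
  qed
qed

lemma rearrangement:
  fixes x y :: "nat \<Rightarrow> real"
  assumes "\<And>a b. a < b \<Longrightarrow> b < k \<Longrightarrow> x a < x b"
    and "\<And>a b. a < b \<Longrightarrow> b < k \<Longrightarrow> y a < y b"
    and "\<sigma> permutes {..<k}"
  shows "(\<Sum>a<k. x a * y (\<sigma> a)) \<le> (\<Sum>a<k. x a * y a) \<and>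
         (\<sigma> \<noteq> id \<longrightarrow> (\<Sum>a<k. x a * y (\<sigma> a)) < (\<Sum>a<k. x a * y a))"
  using assms
proof (induction k arbitrary: \<sigma>)
  case 0
  then have "\<sigma> = id" by (auto simp: permutes_def fun_eq_iff)
  then show ?case by simp
next
  case (Suc k)
  have fixk: "(\<Sum>a<Suc k. x a * y (\<rho> a)) \<le> (\<Sum>a<Suc k. x a * y a) \<and>
         (\<rho> \<noteq> id \<longrightarrow> (\<Sum>a<Suc k. x a * y (\<rho> a)) < (\<Sum>a<Suc k. x a * y a))"
    if r: "\<rho> permutes {..<Suc k}" "\<rho> k = k" for \<rho>
  proof -
    have rk: "\<rho> permutes {..<k}"
      using r unfolding permutes_def by (metis lessThan_iff less_Suc_eq)
    have IH: "(\<Sum>a<k. x a * y (\<rho> a)) \<le> (\<Sum>a<k. x a * y a) \<and>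
         (\<rho> \<noteq> id \<longrightarrow> (\<Sum>a<k. x a * y (\<rho> a)) < (\<Sum>a<k. x a * y a))"
      by (rule Suc.IH) (use Suc.prems rk in auto)
    then show ?thesis using r(2) by (simp add: id_def)
  qed
  show ?case
  proof (cases "\<sigma> k = k")
    case True
    then show ?thesis using fixk[OF Suc.prems(3) True] by (simp add: id_def)
  next
    case False
    define c where "c = Hilbert_Choice.inv \<sigma> k"
    define b where "b = \<sigma> k"
    have sc: "\<sigma> c = k" unfolding c_def using Suc.prems(3) by (simp add: permutes_inverses(1))
    have ck: "c \<noteq> k" using sc False by auto
    have cS: "c < Suc k" unfolding c_def using Suc.prems(3)
      by (meson lessThan_iff lessI permutes_inv permutes_in_image)
    have bS: "b < Suc k" unfolding b_def using Suc.prems(3)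
      by (meson lessThan_iff lessI permutes_in_image)
    have bk: "b \<noteq> k" using False b_def by simp
    define \<rho> where "\<rho> = \<sigma> \<circ> Transposition.transpose c k"
    have rp: "\<rho> permutes {..<Suc k}" unfolding \<rho>_def
      by (rule permutes_compose[OF _ Suc.prems(3)]) (use cS in \<open>auto intro: permutes_swap_id\<close>)
    have rk: "\<rho> k = k" unfolding \<rho>_def using sc by simp
    have rc: "\<rho> c = b" unfolding \<rho>_def b_def by simp
    have ro: "\<rho> a = \<sigma> a" if "a \<noteq> c" "a \<noteq> k" for a
      unfolding \<rho>_def using that by simp
    have "(\<Sum>a<Suc k. x a * y (\<sigma> a)) - (\<Sum>a<Suc k. x a * y (\<rho> a))
        = (\<Sum>a<Suc k. x a * y (\<sigma> a) - x a * y (\<rho> a))"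
      by (simp add: sum_subtractf)
    also have "\<dots> = (\<Sum>a\<in>{c,k}. x a * y (\<sigma> a) - x a * y (\<rho> a))"
      by (rule sum.mono_neutral_right) (use cS ro in auto)
    also have "\<dots> = x c * y k + x k * y b - x c * y b - x k * y k"
      using ck sc rc rk b_def by simp
    also have "\<dots> = - ((x k - x c) * (y k - y b))" by (simp add: algebra_simps)
    also have "\<dots> < 0"
    proof -
      have "x c < x k" using Suc.prems(1) cS ck by simp
      moreover have "y b < y k" using Suc.prems(2) bS bk by simp
      ultimately show ?thesis by (simp add: mult_pos_pos)
    qed
    finally have "(\<Sum>a<Suc k. x a * y (\<sigma> a)) < (\<Sum>a<Suc k. x a * y (\<rho> a))" by simp
    moreover have "(\<Sum>a<Suc k. x a * y (\<rho> a)) \<le> (\<Sum>a<Suc k. x a * y a)"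
      using fixk[OF rp rk] by simp
    ultimately show ?thesis by simp
  qed
qed

definition w :: "nat \<Rightarrow> nat \<Rightarrow> nat" where "w i j = (i - j)^2 + (j - i)^2"

lemma real_w: "real (w i j) = (real i - real j)^2"
  unfolding w_def by (cases "i \<le> j") (auto simp: of_nat_diff power2_commute)

lemma w_strict:
  fixes x y :: "nat \<Rightarrow> nat"
  assumes "\<And>a b. a < b \<Longrightarrow> b < k \<Longrightarrow> x a < x b"
    and "\<And>a b. a < b \<Longrightarrow> b < k \<Longrightarrow> y a < y b"
    and s: "\<sigma> permutes {..<k}"
  shows "(\<Sum>a<k. w (x a) (y a)) \<le> (\<Sum>a<k. w (x a) (y (\<sigma> a)))"
    "\<sigma> \<noteq> id \<Longrightarrow> (\<Sum>a<k. w (x a) (y a)) < (\<Sum>a<k. w (x a) (y (\<sigma> a)))"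
proof -
  have R: "(\<Sum>a<k. real (x a) * real (y (\<sigma> a))) \<le> (\<Sum>a<k. real (x a) * real (y a)) \<and>
         (\<sigma> \<noteq> id \<longrightarrow> (\<Sum>a<k. real (x a) * real (y (\<sigma> a))) < (\<Sum>a<k. real (x a) * real (y a)))"
    by (rule rearrangement[where x="\<lambda>a. real (x a)" and y="\<lambda>a. real (y a)"]) (use assms in auto)
  have sq: "(\<Sum>a<k. (real (y (\<sigma> a)))^2) = (\<Sum>a<k. (real (y a))^2)"
    using sum.permute[OF s, of "\<lambda>a. (real (y a))^2"] by (simp add: comp_def)
  have expand: "real (\<Sum>a<k. w (x a) (y (\<rho> a))) =
      (\<Sum>a<k. (real (x a))^2) + (\<Sum>a<k. (real (y (\<rho> a)))^2) - 2 * (\<Sum>a<k. real (x a) * real (y (\<rho> a)))" for \<rho>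
    by (simp add: real_w power2_diff sum.distrib sum_subtractf sum_distrib_left mult.assoc)
  have e1: "real (\<Sum>a<k. w (x a) (y a)) \<le> real (\<Sum>a<k. w (x a) (y (\<sigma> a)))"
    using expand[of \<sigma>] expand[of id] sq R by simp
  then show "(\<Sum>a<k. w (x a) (y a)) \<le> (\<Sum>a<k. w (x a) (y (\<sigma> a)))" by linarith
  assume "\<sigma> \<noteq> id"
  then have "real (\<Sum>a<k. w (x a) (y a)) < real (\<Sum>a<k. w (x a) (y (\<sigma> a)))"
    using expand[of \<sigma>] expand[of id] sq R by simp
  then show "(\<Sum>a<k. w (x a) (y a)) < (\<Sum>a<k. w (x a) (y (\<sigma> a)))" by linarith
qed

lemma sl_strict:
  assumes "finite J" "a < b" "b < card J"
  shows "sl J ! a < sl J ! b"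
  using sorted_wrt_nth_less[OF strict_sorted_list_of_set[of J]] assms by simp

lemma sl_ge:
  assumes "finite (J::nat set)" "a < card J"
  shows "a \<le> sl J ! a"
  using assms(2)
proof (induction a)
  case (Suc a)
  then have "sl J ! a < sl J ! Suc a" using sl_strict[OF assms(1)] by simp
  then show ?case using Suc by simp
qed simp

lemma sl_lessThan: "a < k \<Longrightarrow> sl {..<k} ! a = a"
  by (simp add: lessThan_atLeast0)

lemma sl_mem: "finite J \<Longrightarrow> a < card J \<Longrightarrow> sl J ! a \<in> J"
  by (metis length_sorted_list_of_set nth_mem set_sorted_list_of_set)

lemma sl_sum_gt:
  assumes "finite (J::nat set)" "card J = k" "J \<noteq> {..<k}"
  shows "(\<Sum>a<k. a) < (\<Sum>a<k. sl J ! a)"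
proof -
  have "\<exists>a<k. sl J ! a \<noteq> a"
  proof (rule ccontr)
    assume "\<not> ?thesis"
    then have "sl J = [0..<k]" using assms by (intro nth_equalityI) auto
    then have "J = {..<k}" using assms(1) by (metis atLeast_upt set_sorted_list_of_set)
    then show False using assms by simp
  qed
  then obtain a where a: "a < k" "sl J ! a \<noteq> a" by auto
  show ?thesis
  proof (rule sum_strict_mono_ex1)
    show "\<forall>x\<in>{..<k}. x \<le> sl J ! x" using sl_ge assms by auto
    show "\<exists>a\<in>{..<k}. a < sl J ! a" using a sl_ge[OF assms(1), of a] assms by force
  qed simp
qed

definition mm :: "nat \<Rightarrow> (nat \<Rightarrow> nat \<Rightarrow> real) \<Rightarrow> (nat \<Rightarrow> nat \<Rightarrow> real) \<Rightarrow> (nat \<Rightarrow> nat \<Rightarrow> real)" where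
  "mm n A B = (\<lambda>i j. \<Sum>l<n. A i l * B l j)"

definition lowertri :: "nat \<Rightarrow> (nat \<Rightarrow> nat \<Rightarrow> real) \<Rightarrow> bool" where
  "lowertri n K \<longleftrightarrow> (\<forall>i l. i < n \<longrightarrow> i < l \<longrightarrow> K i l = 0)"

lemma swap_helper:
  fixes c :: "nat \<Rightarrow> real"
  shows "(\<Sum>i<k. c i * (\<Sum>l<m. K i l * X l)) = (\<Sum>l<m. (\<Sum>i<k. c i * K i l) * X l)"
  by (simp add: sum_distrib_left sum_distrib_right mult.assoc) (rule sum.swap)

lemma flag_minor_eq:
  assumes "finite I"
  shows "flag_minor M I = detk (card I) (\<lambda>a b. M a (sl I ! b))"
  unfolding flag_minor_def minor_def card_lessThan by (rule detk_cong) (simp add: sl_lessThan)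

lemma flag_minor_empty[simp]: "flag_minor M {} = 1"
  unfolding flag_minor_def minor_def by simp

lemma flag_minor_full: "flag_minor M {..<n} = detk n M"
  by (subst flag_minor_eq) (auto intro!: detk_cong simp: sl_lessThan)

lemma mm_lower_trunc:
  assumes "lowertri n K" "a < k" "k \<le> n"
  shows "(\<Sum>l<n. K a l * X l j) = (\<Sum>l<k. K a l * X l j)"
  by (rule sum.mono_neutral_right) (use assms in \<open>auto simp: lowertri_def\<close>)

lemma mm_lower_trunc':
  assumes "lowertri n K" "a < k" "k \<le> n"
  shows "mm n K X a j = (\<Sum>l<k. K a l * X l j)"
  unfolding mm_def by (rule mm_lower_trunc[OF assms])

lemma flag_minor_lower:
  assumes K: "lowertri n K" and I: "I \<subseteq> {..<n}"
  shows "flag_minor (mm n K A) I = (\<Prod>a<card I. K a a) * flag_minor A I"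
proof -
  have fI: "finite I" using I finite_subset by auto
  define k where "k = card I"
  have kn: "k \<le> n" unfolding k_def using card_mono[OF _ I] by simp
  have "flag_minor (mm n K A) I = detk k (\<lambda>a b. \<Sum>l<n. K a l * A l (sl I ! b))"
    unfolding flag_minor_eq[OF fI] k_def mm_def ..
  also have "\<dots> = detk k (\<lambda>a b. \<Sum>l<k. K a l * A l (sl I ! b))"
    by (rule detk_cong, rule mm_lower_trunc[OF K _ kn]) auto
  also have "\<dots> = detk k K * detk k (\<lambda>a b. A a (sl I ! b))"
    by (rule detk_mult)
  also have "detk k K = (\<Prod>a<k. K a a)"
    by (rule detk_lower_triangular) (use K kn in \<open>auto simp: lowertri_def\<close>)
  finally show ?thesis unfolding k_def flag_minor_eq[OF fI] .
qed

lemma flag_sub: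
  assumes K: "lowertri n K" and kn: "k \<le> n"
  shows "flag_of n (mm n K X) k \<subseteq> flag_of n X k"
proof
  fix v assume "v \<in> flag_of n (mm n K X) k"
  then obtain c where v: "v = (\<lambda>j. \<Sum>i<k. c i * mm n K X i j)"
    using kn unfolding flag_of_def by auto
  have "v = (\<lambda>j. \<Sum>l<k. (\<Sum>i<k. c i * K i l) * X l j)"
  proof
    fix j
    have "v j = (\<Sum>i<k. c i * (\<Sum>l<k. K i l * X l j))"
      unfolding v by (intro sum.cong refl) (simp add: mm_lower_trunc'[OF K _ kn])
    also have "\<dots> = (\<Sum>l<k. (\<Sum>i<k. c i * K i l) * X l j)"
      by (rule swap_helper)
    finally show "v j = (\<Sum>l<k. (\<Sum>i<k. c i * K i l) * X l j)" .
  qed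
  then show "v \<in> flag_of n X k" using kn unfolding flag_of_def by auto
qed

lemma flag_sup:
  assumes K: "lowertri n K" and diag: "\<And>i. i < n \<Longrightarrow> K i i \<noteq> 0" and kn: "k \<le> n"
  shows "flag_of n X k \<subseteq> flag_of n (mm n K X) k"
proof
  have "detk k K = (\<Prod>a<k. K a a)"
    by (rule detk_lower_triangular) (use K kn in \<open>auto simp: lowertri_def\<close>)
  also have "\<dots> \<noteq> 0" using diag kn by simp
  finally obtain Ki where Ki: "\<And>i j. i < k \<Longrightarrow> j < k \<Longrightarrow> (\<Sum>l<k. Ki i l * K l j) = (if i = j then 1 else 0)"
    by (metis detk_inverse)
  have Xrow: "X a j = (\<Sum>i<k. Ki a i * mm n K X i j)" if a: "a < k" for a j
  proof -
    have "(\<Sum>i<k. Ki a i * mm n K X i j) = (\<Sum>i<k. Ki a i * (\<Sum>m<k. K i m * X m j))"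
      by (intro sum.cong refl) (simp add: mm_lower_trunc'[OF K _ kn])
    also have "\<dots> = (\<Sum>m<k. (\<Sum>i<k. Ki a i * K i m) * X m j)"
      by (rule swap_helper)
    also have "\<dots> = (\<Sum>m<k. (if a = m then X m j else 0))"
      by (intro sum.cong refl) (use Ki a in auto)
    also have "\<dots> = X a j" using a by simp
    finally show ?thesis by simp
  qed
  fix v assume "v \<in> flag_of n X k"
  then obtain c where v: "v = (\<lambda>j. \<Sum>a<k. c a * X a j)"
    using kn unfolding flag_of_def by auto
  have "v = (\<lambda>j. \<Sum>i<k. (\<Sum>a<k. c a * Ki a i) * mm n K X i j)"
  proof
    fix j
    have "v j = (\<Sum>a<k. c a * (\<Sum>i<k. Ki a i * mm n K X i j))"
      unfolding v by (intro sum.cong refl) (use Xrow in auto)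
    also have "\<dots> = (\<Sum>i<k. (\<Sum>a<k. c a * Ki a i) * mm n K X i j)"
      by (rule swap_helper)
    finally show "v j = (\<Sum>i<k. (\<Sum>a<k. c a * Ki a i) * mm n K X i j)" .
  qed
  then show "v \<in> flag_of n (mm n K X) k" using kn unfolding flag_of_def by auto
qed

lemma flag_eq:
  assumes K: "lowertri n K" and diag: "\<And>i. i < n \<Longrightarrow> K i i \<noteq> 0"
  shows "flag_of n (mm n K X) = flag_of n X"
proof
  fix k show "flag_of n (mm n K X) k = flag_of n X k"
  proof (cases "k \<le> n")
    case True
    then show ?thesis using flag_sub[OF K True] flag_sup[OF K diag True] by blast
  next
    case False
    then show ?thesis unfolding flag_of_def by simp
  qed
qed

lemma rows_from_flag:
  assumes eq: "flag_of n M' = flag_of n A"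
  obtains K where "lowertri n K" "\<And>i j. i < n \<Longrightarrow> M' i j = mm n K A i j"
    "\<And>i l. n \<le> i \<Longrightarrow> K i l = 0"
proof -
  have ex: "\<exists>c. (\<lambda>j. M' i j) = (\<lambda>j. \<Sum>l<Suc i. c l * A l j)" if i: "i < n" for i
  proof -
    have "(\<lambda>j. M' i j) \<in> flag_of n M' (Suc i)"
    proof -
      have "(\<lambda>j. M' i j) = (\<lambda>j. \<Sum>l<Suc i. (if l = i then 1 else 0) * M' l j)"
        by (simp add: if_distrib cong: if_cong)
      then have "(\<lambda>j. M' i j) \<in> {v. \<exists>c. v = (\<lambda>j. \<Sum>l<Suc i. c l * M' l j)}"
        by (intro CollectI exI[where x="\<lambda>l. if l = i then 1 else 0"])
      then show ?thesis using i unfolding flag_of_def by simp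
    qed
    then have "(\<lambda>j. M' i j) \<in> flag_of n A (Suc i)" using eq by simp
    then show ?thesis using i unfolding flag_of_def by (auto split: if_splits)
  qed
  define cc where "cc i = (SOME c. (\<lambda>j. M' i j) = (\<lambda>j. \<Sum>l<Suc i. c l * A l j))" for i
  have cc: "(\<lambda>j. M' i j) = (\<lambda>j. \<Sum>l<Suc i. cc i l * A l j)" if "i < n" for i
    unfolding cc_def by (rule someI_ex[OF ex[OF that]])
  define K where "K i l = (if i < n \<and> l \<le> i then cc i l else 0)" for i l
  show ?thesis
  proof (rule that[of K])
    show "lowertri n K" unfolding lowertri_def K_def by auto
    show "K i l = 0" if "n \<le> i" for i l using that unfolding K_def by auto
    fix i j assume i: "i < n"
    have "mm n K A i j = (\<Sum>l<Suc i. K i l * A l j)"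
      unfolding mm_def by (rule sum.mono_neutral_right) (use i in \<open>auto simp: K_def\<close>)
    also have "\<dots> = (\<Sum>l<Suc i. cc i l * A l j)"
      by (intro sum.cong refl) (use i in \<open>auto simp: K_def\<close>)
    also have "\<dots> = M' i j" using fun_cong[OF cc[OF i], of j] by simp
    finally show "M' i j = mm n K A i j" by simp
  qed
qed

definition Csign :: "nat \<Rightarrow> (nat \<Rightarrow> nat \<Rightarrow> real) set" where
  "Csign n = {M. \<forall>k\<le>n. (\<forall>I. I \<subseteq> {..<n} \<and> card I = k \<longrightarrow> 0 \<le> flag_minor M I) \<or>
                        (\<forall>I. I \<subseteq> {..<n} \<and> card I = k \<longrightarrow> flag_minor M I \<le> 0)}"

definition Sset :: "nat \<Rightarrow> (nat \<Rightarrow> (nat \<Rightarrow> real) set) set" where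
  "Sset n = {F \<in> Fl n. \<exists>M \<in> GLn n. flag_of n M = F \<and> (\<forall>I \<subseteq> {..<n}. flag_minor M I \<ge> 0)}"

lemma GLnD: "M \<in> GLn n \<Longrightarrow> M \<in> sqmats n" "M \<in> GLn n \<Longrightarrow> detk n M \<noteq> 0"
  unfolding GLn_def by auto

lemma sqmatsD: "M \<in> sqmats n \<Longrightarrow> n \<le> i \<or> n \<le> j \<Longrightarrow> M i j = 0"
  unfolding sqmats_def by auto

lemma mm_eq_full:
  assumes "M' \<in> sqmats n" "\<And>i j. i < n \<Longrightarrow> M' i j = mm n K A i j" "\<And>i l. n \<le> i \<Longrightarrow> K i l = 0"
  shows "M' = mm n K A"
proof (intro ext)
  fix i j show "M' i j = mm n K A i j"
  proof (cases "i < n")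
    case False
    then show ?thesis using assms(1,3) sqmatsD[of M' n i j] unfolding mm_def by simp
  qed (use assms in auto)
qed

lemma pre_char1:
  assumes A: "A \<in> GLn n" and M': "M' \<in> GLn n" and eq: "flag_of n M' = flag_of n A"
    and nn: "\<forall>I \<subseteq> {..<n}. 0 \<le> flag_minor M' I"
  shows "A \<in> Csign n"
proof -
  obtain K where K: "lowertri n K" "\<And>i j. i < n \<Longrightarrow> M' i j = mm n K A i j"
    "\<And>i l. n \<le> i \<Longrightarrow> K i l = 0"
    using rows_from_flag[OF eq] by metis
  have M'eq: "M' = mm n K A" by (rule mm_eq_full[OF GLnD(1)[OF M'] K(2,3)]) auto
  have fm: "flag_minor M' I = (\<Prod>a<card I. K a a) * flag_minor A I" if "I \<subseteq> {..<n}" for I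
    unfolding M'eq by (rule flag_minor_lower[OF K(1) that])
  have "flag_minor M' {..<n} \<noteq> 0" using GLnD(2)[OF M'] by (simp add: flag_minor_full)
  then have pn: "(\<Prod>a<n. K a a) \<noteq> 0" using fm[of "{..<n}"] by auto
  have diag: "K a a \<noteq> 0" if "a < n" for a
    using pn that by (auto simp: prod_zero_iff)
  show ?thesis unfolding Csign_def mem_Collect_eq
  proof (intro allI impI)
    fix k assume kn: "k \<le> n"
    have lz: "(\<Prod>a<k. K a a) \<noteq> 0" using diag kn by (auto simp: prod_zero_iff)
    show "(\<forall>I. I \<subseteq> {..<n} \<and> card I = k \<longrightarrow> 0 \<le> flag_minor A I) \<or>
          (\<forall>I. I \<subseteq> {..<n} \<and> card I = k \<longrightarrow> flag_minor A I \<le> 0)"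
    proof (cases "(\<Prod>a<k. K a a) > 0")
      case True
      have "0 \<le> flag_minor A I" if "I \<subseteq> {..<n}" "card I = k" for I
        using nn[rule_format, OF that(1)] fm[OF that(1)] that(2) True
        by (simp add: zero_le_mult_iff)
      then show ?thesis by blast
    next
      case False
      then have neg: "(\<Prod>a<k. K a a) < 0" using lz by linarith
      have "flag_minor A I \<le> 0" if "I \<subseteq> {..<n}" "card I = k" for I
        using nn[rule_format, OF that(1)] fm[OF that(1)] that(2) neg
        by (simp add: zero_le_mult_iff)
      then show ?thesis by blast
    qed
  qed
qed

lemma pre_char2:
  assumes A: "A \<in> GLn n" and C: "A \<in> Csign n"
  shows "\<exists>M' \<in> GLn n. flag_of n M' = flag_of n A \<and> (\<forall>I \<subseteq> {..<n}. 0 \<le> flag_minor M' I)"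
proof -
  define s where "s k = (if (\<forall>I. I \<subseteq> {..<n} \<and> card I = k \<longrightarrow> 0 \<le> flag_minor A I) then 1 else -1::real)" for k
  define d where "d a = s (Suc a) * s a" for a
  define D where "D i l = (if i = l \<and> i < n then d i else 0)" for i l
  have s01: "s k = 1 \<or> s k = -1" for k unfolding s_def by auto
  have s0: "s 0 = 1"
  proof -
    have "0 \<le> flag_minor A I" if "I \<subseteq> {..<n}" "card I = 0" for I
    proof -
      have "finite I" using that(1) finite_subset by auto
      then have "I = {}" using that(2) by simp
      then show ?thesis by simp
    qed
    then show ?thesis unfolding s_def by auto
  qed
  have prodd: "(\<Prod>a<k. d a) = s k" for k
  proof (induction k)
    case (Suc k)
    have "s k * s k = 1" using s01[of k] by auto
    then show ?case using Suc by (simp add: d_def mult_ac)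
  qed (simp add: s0)
  have D: "lowertri n D" unfolding lowertri_def D_def by auto
  have Ddiag: "D i i \<noteq> 0" if "i < n" for i
    using that s01[of i] s01[of "Suc i"] unfolding D_def d_def by auto
  define M' where "M' = mm n D A"
  have fm: "flag_minor M' I = s (card I) * flag_minor A I" if I: "I \<subseteq> {..<n}" for I
  proof -
    have kn: "card I \<le> n" using card_mono[OF _ I] by simp
    have "flag_minor M' I = (\<Prod>a<card I. D a a) * flag_minor A I"
      unfolding M'_def by (rule flag_minor_lower[OF D I])
    also have "(\<Prod>a<card I. D a a) = (\<Prod>a<card I. d a)"
      using kn by (intro prod.cong) (auto simp: D_def)
    finally show ?thesis by (simp add: prodd)
  qed
  have nn: "0 \<le> flag_minor M' I" if I: "I \<subseteq> {..<n}" for I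
  proof (cases "\<forall>J. J \<subseteq> {..<n} \<and> card J = card I \<longrightarrow> 0 \<le> flag_minor A J")
    case True
    then show ?thesis using fm[OF I] I unfolding s_def by auto
  next
    case False
    have kn: "card I \<le> n" using card_mono[OF _ I] by simp
    then have "flag_minor A I \<le> 0" using C False I unfolding Csign_def by blast
    then show ?thesis using fm[OF I] False unfolding s_def by auto
  qed
  have sq: "M' \<in> sqmats n"
    unfolding sqmats_def M'_def mm_def
    using sqmatsD[OF GLnD(1)[OF A]] by (auto simp: D_def)
  have "detk n M' = s n * detk n A"
    using fm[of "{..<n}"] by (simp add: flag_minor_full)
  then have "detk n M' \<noteq> 0" using GLnD(2)[OF A] s01[of n] by auto
  then have "M' \<in> GLn n" using sq unfolding GLn_def by auto
  moreover have "flag_of n M' = flag_of n A"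
    unfolding M'_def by (rule flag_eq[OF D Ddiag])
  ultimately show ?thesis using nn by blast
qed

lemma pre_char:
  assumes A: "A \<in> GLn n"
  shows "flag_of n A \<in> Sset n \<longleftrightarrow> A \<in> Csign n"
proof
  assume "flag_of n A \<in> Sset n"
  then obtain M' where "M' \<in> GLn n" "flag_of n M' = flag_of n A" "\<forall>I \<subseteq> {..<n}. 0 \<le> flag_minor M' I"
    unfolding Sset_def by auto
  then show "A \<in> Csign n" using pre_char1[OF A] by blast
next
  assume "A \<in> Csign n"
  then show "flag_of n A \<in> Sset n"
    using pre_char2[OF A] A unfolding Sset_def Fl_def by auto
qed

lemma cont_entry: "continuous_on UNIV (\<lambda>M::nat \<Rightarrow> nat \<Rightarrow> real. M i j)"
  by (rule continuous_on_product_then_coordinatewise) simp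

lemma cont_detk:
  assumes "\<And>i j. continuous_on S (\<lambda>t. G t i j)"
  shows "continuous_on S (\<lambda>t. detk k (G t))"
  unfolding detk_def by (intro continuous_intros assms)

lemma cont_flag_minor: "continuous_on UNIV (\<lambda>M. flag_minor M I)"
  unfolding flag_minor_def minor_def by (intro cont_detk cont_entry)

lemma Csign_closed: "closed (Csign n)"
proof -
  define Is where "Is k = {I. I \<subseteq> {..<n} \<and> card I = k}" for k
  have "Csign n = (\<Inter>k\<in>{..n}. ((\<Inter>I\<in>Is k. {M. 0 \<le> flag_minor M I}) \<union> (\<Inter>I\<in>Is k. {M. flag_minor M I \<le> 0})))"
    unfolding Csign_def Is_def by auto
  moreover have "closed \<dots>"
    by (intro closed_INT ballI closed_Un closed_Collect_le cont_flag_minor continuous_on_const)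
  ultimately show ?thesis by simp
qed

lemma Fl_pos_sub: "Fl_pos n \<subseteq> Sset n"
proof
  fix F assume "F \<in> Fl_pos n"
  then obtain A where A: "A \<in> GLn n" "totally_positive n A" "F = flag_of n A"
    unfolding Fl_pos_def by auto
  have "0 \<le> flag_minor A I" if I: "I \<subseteq> {..<n}" for I
  proof (cases "I = {}")
    case False
    have fI: "finite I" using I finite_subset by auto
    have "card I \<le> n" using card_mono[OF _ I] by simp
    moreover have "card I \<noteq> 0" using False fI by simp
    ultimately have "{..<card I} \<subseteq> {..<n}" "{..<card I} \<noteq> {}" by auto
    then have "0 < minor A {..<card I} I"
      using A(2) I unfolding totally_positive_def by auto
    then show ?thesis unfolding flag_minor_def by simp
  qed simp
  then show "F \<in> Sset n" using A unfolding Sset_def Fl_def by auto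
qed

definition Tm :: "nat \<Rightarrow> real \<Rightarrow> nat \<Rightarrow> nat \<Rightarrow> real" where
  "Tm n \<delta> i j = (if i < n \<and> j < n then 1 else 0) * \<delta> ^ (w i j)"

lemma w_zero_iff: "w i j = 0 \<longleftrightarrow> i = j"
  unfolding w_def by auto

lemma w_same[simp]: "w i i = 0" by (simp add: w_zero_iff)

lemma sum_Sigma_pair:
  assumes "finite A" "\<And>a. a \<in> A \<Longrightarrow> finite (B a)"
  shows "(\<Sum>a\<in>A. \<Sum>b\<in>B a. h a b) = (\<Sum>x\<in>Sigma A B. h (fst x) (snd x))"
  using assms by (subst sum.Sigma) (auto simp: split_def)

lemma finite_Js: "finite {J. J \<subseteq> {..<(n::nat)} \<and> card J = k}"
  by (rule finite_subset[of _ "Pow {..<n}"]) auto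

lemma strict_sl:
  assumes "finite J" "card J = k"
  shows "\<And>a b. a < b \<Longrightarrow> b < k \<Longrightarrow> sl J ! a < sl J ! b"
  using sl_strict[OF assms(1)] assms(2) by auto

lemma tm_minor:
  assumes J: "J \<subseteq> {..<n}" and C: "C \<subseteq> {..<n}" and k: "card J = k" "card C = k"
  shows "detk k (\<lambda>a b. Tm n \<delta> (sl J ! a) (sl C ! b)) =
    (\<Sum>\<sigma>\<in>{\<sigma>. \<sigma> permutes {..<k}}. of_int (sign \<sigma>) * \<delta> ^ (\<Sum>a<k. w (sl J ! a) (sl C ! \<sigma> a)))"
  unfolding detk_def
proof (rule sum.cong[OF refl])
  fix \<sigma> assume s: "\<sigma> \<in> {\<sigma>. \<sigma> permutes {..<k}}"
  have fJ: "finite J" "finite C" using J C finite_subset by auto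
  have "(\<Prod>a<k. Tm n \<delta> (sl J ! a) (sl C ! \<sigma> a)) = (\<Prod>a<k. \<delta> ^ w (sl J ! a) (sl C ! \<sigma> a))"
  proof (rule prod.cong[OF refl])
    fix a assume a: "a \<in> {..<k}"
    have "\<sigma> a < k" using s a by (auto dest: permutes_in_image)
    then have "sl J ! a \<in> J" "sl C ! \<sigma> a \<in> C" using sl_mem fJ a k by auto
    then show "Tm n \<delta> (sl J ! a) (sl C ! \<sigma> a) = \<delta> ^ w (sl J ! a) (sl C ! \<sigma> a)"
      using J C unfolding Tm_def by auto
  qed
  then show "of_int (sign \<sigma>) * (\<Prod>a<k. Tm n \<delta> (sl J ! a) (sl C ! \<sigma> a)) =
    of_int (sign \<sigma>) * \<delta> ^ (\<Sum>a<k. w (sl J ! a) (sl C ! \<sigma> a))"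
    by (simp add: power_sum)
qed

lemma exists_nonzero_minor:
  assumes M: "M \<in> GLn n" and kn: "k \<le> n"
  shows "\<exists>J. J \<subseteq> {..<n} \<and> card J = k \<and> flag_minor M J \<noteq> 0"
proof (rule ccontr)
  assume nz: "\<not> ?thesis"
  obtain N where N: "\<And>i j. i < n \<Longrightarrow> j < n \<Longrightarrow> (\<Sum>l<n. M i l * N l j) = (if i = j then 1 else 0)"
    using detk_inverse[OF GLnD(2)[OF M]] by metis
  have "1 = detk k (\<lambda>a b. if a = b then 1 else 0::real)"
    by (subst detk_lower_triangular) auto
  also have "\<dots> = detk k (\<lambda>a b. \<Sum>l<n. M a l * N l b)"
    by (rule detk_cong) (use N kn in auto)
  also have "\<dots> = (\<Sum>J\<in>{J. J \<subseteq> {..<n} \<and> card J = k}.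
        detk k (\<lambda>i j. M i (sl J ! j)) * detk k (\<lambda>i j. N (sl J ! i) j))"
    by (rule cauchy_binet)
  also have "\<dots> = 0"
  proof (rule sum.neutral, intro ballI)
    fix J assume "J \<in> {J. J \<subseteq> {..<n} \<and> card J = k}"
    then have J: "J \<subseteq> {..<n}" "card J = k" by auto
    have "finite J" using J finite_subset by auto
    then have "detk k (\<lambda>i j. M i (sl J ! j)) = flag_minor M J" using flag_minor_eq J by simp
    then show "detk k (\<lambda>i j. M i (sl J ! j)) * detk k (\<lambda>i j. N (sl J ! i) j) = 0"
      using nz J by auto
  qed
  finally show False by simp
qed

lemma step1_minor:
  assumes M: "M \<in> GLn n" and nn: "\<forall>I \<subseteq> {..<n}. 0 \<le> flag_minor M I" and C: "C \<subseteq> {..<n}"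
  shows "eventually (\<lambda>\<delta>. 0 < flag_minor (mm n M (Tm n \<delta>)) C) (at_right 0)"
proof -
  define k where "k = card C"
  have fC: "finite C" using C finite_subset by auto
  have kn: "k \<le> n" unfolding k_def using card_mono[OF _ C] by simp
  define Js where "Js = {J. J \<subseteq> {..<n} \<and> card J = k}"
  define Ps where "Ps = {\<sigma>. \<sigma> permutes {..<k}}"
  define P where "P = Sigma Js (\<lambda>_. Ps)"
  define E where "E J \<sigma> = (\<Sum>a<k. w (sl J ! a) (sl C ! \<sigma> a))" for J \<sigma>
  define c where "c x = flag_minor M (fst x) * of_int (sign (snd x))" for x :: "nat set \<times> (nat \<Rightarrow> nat)"
  define e where "e x = E (fst x) (snd x)" for x :: "nat set \<times> (nat \<Rightarrow> nat)"
  have finJs: "finite Js" unfolding Js_def by (rule finite_Js)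
  have finPs: "finite Ps" unfolding Ps_def by (simp add: finite_permutations)
  have finP: "finite P" unfolding P_def using finJs finPs by simp
  have expand: "flag_minor (mm n M (Tm n \<delta>)) C = (\<Sum>x\<in>P. c x * \<delta> ^ e x)" for \<delta>
  proof -
    have "flag_minor (mm n M (Tm n \<delta>)) C = detk k (\<lambda>a b. \<Sum>l<n. M a l * Tm n \<delta> l (sl C ! b))"
      unfolding flag_minor_eq[OF fC] k_def mm_def ..
    also have "\<dots> = (\<Sum>J\<in>Js. detk k (\<lambda>i j. M i (sl J ! j)) * detk k (\<lambda>i j. Tm n \<delta> (sl J ! i) (sl C ! j)))"
      unfolding Js_def by (rule cauchy_binet)
    also have "\<dots> = (\<Sum>J\<in>Js. \<Sum>\<sigma>\<in>Ps. flag_minor M J * of_int (sign \<sigma>) * \<delta> ^ E J \<sigma>)"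
    proof (rule sum.cong[OF refl])
      fix J assume J: "J \<in> Js"
      have fJ: "finite J" using J finite_subset unfolding Js_def by auto
      have "detk k (\<lambda>i j. M i (sl J ! j)) = flag_minor M J"
        using flag_minor_eq[OF fJ] J unfolding Js_def by simp
      moreover have "detk k (\<lambda>i j. Tm n \<delta> (sl J ! i) (sl C ! j)) = (\<Sum>\<sigma>\<in>Ps. of_int (sign \<sigma>) * \<delta> ^ E J \<sigma>)"
        unfolding Ps_def E_def by (rule tm_minor) (use J C k_def in \<open>auto simp: Js_def\<close>)
      ultimately show "detk k (\<lambda>i j. M i (sl J ! j)) * detk k (\<lambda>i j. Tm n \<delta> (sl J ! i) (sl C ! j)) =
          (\<Sum>\<sigma>\<in>Ps. flag_minor M J * of_int (sign \<sigma>) * \<delta> ^ E J \<sigma>)"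
        by (simp add: sum_distrib_left mult.assoc)
    qed
    also have "\<dots> = (\<Sum>x\<in>P. c x * \<delta> ^ e x)"
      unfolding P_def c_def e_def by (rule sum_Sigma_pair) (use finJs finPs in auto)
    finally show ?thesis .
  qed
  have Emono: "E J id \<le> E J \<sigma>" "\<sigma> \<noteq> id \<Longrightarrow> E J id < E J \<sigma>" if J: "J \<in> Js" and s: "\<sigma> \<in> Ps" for J \<sigma>
  proof -
    have fJ: "finite J" using J finite_subset unfolding Js_def by auto
    have sJ: "\<And>a b. a < b \<Longrightarrow> b < k \<Longrightarrow> sl J ! a < sl J ! b"
      using strict_sl[OF fJ] J unfolding Js_def by auto
    have sC: "\<And>a b. a < b \<Longrightarrow> b < k \<Longrightarrow> sl C ! a < sl C ! b"
      using strict_sl[OF fC] k_def by auto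
    have s': "\<sigma> permutes {..<k}" using s unfolding Ps_def by simp
    show "E J id \<le> E J \<sigma>" unfolding E_def using w_strict(1)[OF sJ sC s'] by simp
    assume "\<sigma> \<noteq> id"
    then show "E J id < E J \<sigma>" unfolding E_def using w_strict(2)[OF sJ sC s'] by simp
  qed
  define Jpos where "Jpos = {J\<in>Js. 0 < flag_minor M J}"
  have Jpos_ne: "Jpos \<noteq> {}"
  proof -
    obtain J where J: "J \<subseteq> {..<n}" "card J = k" "flag_minor M J \<noteq> 0"
      using exists_nonzero_minor[OF M kn] by auto
    then have "0 < flag_minor M J" using nn by (metis order_le_less)
    then show ?thesis using J unfolding Jpos_def Js_def by auto
  qed
  have finJpos: "finite Jpos" unfolding Jpos_def using finJs by simp
  define e0 where "e0 = Min ((\<lambda>J. E J id) ` Jpos)"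
  have e0le: "e0 \<le> E J id" if "J \<in> Jpos" for J
    unfolding e0_def using finJpos that by simp
  have "e0 \<in> (\<lambda>J. E J id) ` Jpos" unfolding e0_def using finJpos Jpos_ne by (intro Min_in) auto
  then obtain Js0 where Js0: "Js0 \<in> Jpos" "E Js0 id = e0" by auto
  have cnz: "fst x \<in> Jpos" if "x \<in> P" "c x \<noteq> 0" for x
  proof -
    have "flag_minor M (fst x) \<noteq> 0" using that(2) unfolding c_def by auto
    moreover have "0 \<le> flag_minor M (fst x)" using nn that(1) unfolding P_def Js_def by auto
    ultimately show ?thesis using that(1) unfolding Jpos_def P_def by auto
  qed
  have idPs: "id \<in> Ps" unfolding Ps_def by (simp add: permutes_id)
  show ?thesis
    unfolding expand
  proof (rule dominance)
    show "finite P" by (rule finP)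
    show "e0 \<le> e x" if x: "x \<in> P" "c x \<noteq> 0" for x
    proof -
      have "e0 \<le> E (fst x) id" using e0le[OF cnz[OF x]] .
      also have "\<dots> \<le> E (fst x) (snd x)" using Emono(1)[of "fst x" "snd x"] x unfolding P_def by auto
      finally show ?thesis unfolding e_def .
    qed
    show "0 < (\<Sum>x\<in>{x\<in>P. e x = e0}. c x)"
    proof (rule sum_pos2[where i="(Js0, id)"])
      show "finite {x\<in>P. e x = e0}" using finP by simp
      show "(Js0, id) \<in> {x\<in>P. e x = e0}"
        using Js0 idPs unfolding P_def e_def Jpos_def by auto
      show "0 < c (Js0, id)" using Js0 unfolding c_def Jpos_def by simp
      show "0 \<le> c x" if x: "x \<in> {x\<in>P. e x = e0}" for x
      proof (cases "c x = 0")
        case False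
        have J: "fst x \<in> Jpos" using cnz[OF _ False] x by auto
        have "snd x = id"
        proof (rule ccontr)
          assume "snd x \<noteq> id"
          then have "E (fst x) id < E (fst x) (snd x)"
            using Emono(2)[of "fst x" "snd x"] x unfolding P_def by auto
          then show False using e0le[OF J] x unfolding e_def by auto
        qed
        then show ?thesis using J unfolding c_def Jpos_def by simp
      qed simp
    qed
  qed
qed

lemma Tm_zero: "M \<in> sqmats n \<Longrightarrow> mm n M (Tm n 0) = M"
proof (intro ext)
  fix i j assume M: "M \<in> sqmats n"
  have "mm n M (Tm n 0) i j = (\<Sum>l<n. if l = j then (if j < n then M i l else 0) else 0)"
    unfolding mm_def Tm_def by (intro sum.cong refl) (auto simp: w_zero_iff power_0_left)
  also have "\<dots> = (if j < n then M i j else 0)" by simp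
  also have "\<dots> = M i j" using sqmatsD[OF M, of i j] by auto
  finally show "mm n M (Tm n 0) i j = M i j" .
qed

lemma cont_Tm: "continuous_on UNIV (\<lambda>\<delta>. mm n M (Tm n \<delta>))"
  unfolding mm_def Tm_def
  by (intro continuous_on_coordinatewise_then_product continuous_intros)

lemma step1:
  assumes M: "M \<in> GLn n" and nn: "\<forall>I \<subseteq> {..<n}. 0 \<le> flag_minor M I"
    and O: "open U0" "M \<in> U0"
  shows "\<exists>X. X \<in> U0 \<and> X \<in> sqmats n \<and> (\<forall>I \<subseteq> {..<n}. 0 < flag_minor X I)"
proof -
  let ?h = "\<lambda>\<delta>. mm n M (Tm n \<delta>)"
  have "(?h \<longlongrightarrow> ?h 0) (at 0)"
    using cont_Tm[of n M] by (simp add: continuous_on_def)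
  then have "(?h \<longlongrightarrow> M) (at_right 0)"
    using Tm_zero[OF GLnD(1)[OF M]] by (metis tendsto_mono at_le subset_UNIV)
  then have ev1: "eventually (\<lambda>\<delta>. ?h \<delta> \<in> U0) (at_right 0)"
    using O by (rule topological_tendstoD)
  have ev2: "eventually (\<lambda>\<delta>. \<forall>C\<in>Pow {..<n}. 0 < flag_minor (?h \<delta>) C) (at_right 0)"
    by (rule eventually_ball_finite) (use step1_minor[OF M nn] in auto)
  obtain \<delta> where d: "?h \<delta> \<in> U0" "\<forall>C\<in>Pow {..<n}. 0 < flag_minor (?h \<delta>) C"
    using eventually_happens'[OF _ eventually_conj[OF ev1 ev2]] by auto
  have "?h \<delta> \<in> sqmats n"
    unfolding sqmats_def mm_def Tm_def using sqmatsD[OF GLnD(1)[OF M]] by auto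
  then show ?thesis using d by auto
qed

definition Nn :: "nat \<Rightarrow> nat" where "Nn n = n^3 + 1"

definition Lm :: "nat \<Rightarrow> real \<Rightarrow> nat \<Rightarrow> nat \<Rightarrow> real" where
  "Lm n \<epsilon> i j = (if j \<le> i \<and> i < n then \<epsilon> ^ (Nn n * j + w i j) else 0)"

lemma prod_if_zero:
  assumes "finite A"
  shows "(\<Prod>a\<in>A. if P a then f a else (0::real)) = (if \<forall>a\<in>A. P a then (\<Prod>a\<in>A. f a) else 0)"
proof (cases "\<forall>a\<in>A. P a")
  case True
  then show ?thesis by (auto intro!: prod.cong)
next
  case False
  then obtain a where "a \<in> A" "\<not> P a" by auto
  then show ?thesis using assms False by (auto intro!: prod_zero)
qed

lemma lm_minor:
  assumes R: "R \<subseteq> {..<n}" and J: "J \<subseteq> {..<n}" and k: "card R = k" "card J = k"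
  shows "detk k (\<lambda>a b. Lm n \<epsilon> (sl R ! a) (sl J ! b)) =
    (\<Sum>\<sigma>\<in>{\<sigma>. \<sigma> permutes {..<k}}. (of_int (sign \<sigma>) * (if \<forall>a<k. sl J ! \<sigma> a \<le> sl R ! a then 1 else 0))
         * \<epsilon> ^ (\<Sum>a<k. Nn n * sl J ! \<sigma> a + w (sl R ! a) (sl J ! \<sigma> a)))"
  unfolding detk_def
proof (rule sum.cong[OF refl])
  fix \<sigma> assume s: "\<sigma> \<in> {\<sigma>. \<sigma> permutes {..<k}}"
  have fR: "finite R" using R finite_subset by auto
  have "(\<Prod>a<k. Lm n \<epsilon> (sl R ! a) (sl J ! \<sigma> a)) =
        (\<Prod>a<k. if sl J ! \<sigma> a \<le> sl R ! a then \<epsilon> ^ (Nn n * sl J ! \<sigma> a + w (sl R ! a) (sl J ! \<sigma> a)) else 0)"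
  proof (rule prod.cong[OF refl])
    fix a assume a: "a \<in> {..<k}"
    then have "sl R ! a \<in> R" using sl_mem fR k by auto
    then show "Lm n \<epsilon> (sl R ! a) (sl J ! \<sigma> a) =
       (if sl J ! \<sigma> a \<le> sl R ! a then \<epsilon> ^ (Nn n * sl J ! \<sigma> a + w (sl R ! a) (sl J ! \<sigma> a)) else 0)"
      using R unfolding Lm_def by auto
  qed
  also have "\<dots> = (if \<forall>a<k. sl J ! \<sigma> a \<le> sl R ! a then 1 else 0) *
        \<epsilon> ^ (\<Sum>a<k. Nn n * sl J ! \<sigma> a + w (sl R ! a) (sl J ! \<sigma> a))"
    by (subst prod_if_zero) (auto simp: power_sum)
  finally show "of_int (sign \<sigma>) * (\<Prod>a<k. Lm n \<epsilon> (sl R ! a) (sl J ! \<sigma> a)) =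
    (of_int (sign \<sigma>) * (if \<forall>a<k. sl J ! \<sigma> a \<le> sl R ! a then 1 else 0))
         * \<epsilon> ^ (\<Sum>a<k. Nn n * sl J ! \<sigma> a + w (sl R ! a) (sl J ! \<sigma> a))"
    by simp
qed

lemma w_le: "i < n \<Longrightarrow> j < n \<Longrightarrow> w i j \<le> n^2"
  unfolding w_def by (cases "i \<le> j") (auto intro!: power_mono)

lemma step2_minor:
  assumes fpos: "\<forall>I \<subseteq> {..<n}. 0 < flag_minor X I"
    and R: "R \<subseteq> {..<n}" and C: "C \<subseteq> {..<n}" and RC: "card R = card C"
  shows "eventually (\<lambda>\<epsilon>. 0 < minor (mm n (Lm n \<epsilon>) X) R C) (at_right 0)"
proof -
  define k where "k = card C"
  have fC: "finite C" using C finite_subset by auto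
  have fR: "finite R" using R finite_subset by auto
  have kn: "k \<le> n" unfolding k_def using card_mono[OF _ C] by simp
  have Rk: "card R = k" using RC k_def by simp
  define Js where "Js = {J. J \<subseteq> {..<n} \<and> card J = k}"
  define Ps where "Ps = {\<sigma>. \<sigma> permutes {..<k}}"
  define P where "P = Sigma Js (\<lambda>_. Ps)"
  define E where "E J \<sigma> = (\<Sum>a<k. Nn n * sl J ! \<sigma> a + w (sl R ! a) (sl J ! \<sigma> a))" for J \<sigma>
  define F where "F J \<sigma> = (if \<forall>a<k. sl J ! \<sigma> a \<le> sl R ! a then 1 else 0::real)" for J \<sigma>
  define c where "c x = of_int (sign (snd x)) * F (fst x) (snd x) * minor X (fst x) C" for x :: "nat set \<times> (nat \<Rightarrow> nat)"
  define e where "e x = E (fst x) (snd x)" for x :: "nat set \<times> (nat \<Rightarrow> nat)"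
  define J0 where "J0 = {..<k}"
  have finJs: "finite Js" unfolding Js_def by (rule finite_Js)
  have finPs: "finite Ps" unfolding Ps_def by (simp add: finite_permutations)
  have finP: "finite P" unfolding P_def using finJs finPs by simp
  have expand: "minor (mm n (Lm n \<epsilon>) X) R C = (\<Sum>x\<in>P. c x * \<epsilon> ^ e x)" for \<epsilon>
  proof -
    have "minor (mm n (Lm n \<epsilon>) X) R C = detk k (\<lambda>a b. \<Sum>l<n. Lm n \<epsilon> (sl R ! a) l * X l (sl C ! b))"
      unfolding minor_def mm_def Rk ..
    also have "\<dots> = (\<Sum>J\<in>Js. detk k (\<lambda>i j. Lm n \<epsilon> (sl R ! i) (sl J ! j)) * detk k (\<lambda>i j. X (sl J ! i) (sl C ! j)))"
      unfolding Js_def by (rule cauchy_binet)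
    also have "\<dots> = (\<Sum>J\<in>Js. \<Sum>\<sigma>\<in>Ps. of_int (sign \<sigma>) * F J \<sigma> * minor X J C * \<epsilon> ^ E J \<sigma>)"
    proof (rule sum.cong[OF refl])
      fix J assume J: "J \<in> Js"
      have "detk k (\<lambda>i j. X (sl J ! i) (sl C ! j)) = minor X J C"
        using J unfolding minor_def Js_def by simp
      moreover have "detk k (\<lambda>i j. Lm n \<epsilon> (sl R ! i) (sl J ! j)) = (\<Sum>\<sigma>\<in>Ps. of_int (sign \<sigma>) * F J \<sigma> * \<epsilon> ^ E J \<sigma>)"
        unfolding Ps_def E_def F_def by (rule lm_minor) (use J R Rk in \<open>auto simp: Js_def\<close>)
      ultimately show "detk k (\<lambda>i j. Lm n \<epsilon> (sl R ! i) (sl J ! j)) * detk k (\<lambda>i j. X (sl J ! i) (sl C ! j)) =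
          (\<Sum>\<sigma>\<in>Ps. of_int (sign \<sigma>) * F J \<sigma> * minor X J C * \<epsilon> ^ E J \<sigma>)"
        by (simp add: sum_distrib_left mult_ac)
    qed
    also have "\<dots> = (\<Sum>x\<in>P. c x * \<epsilon> ^ e x)"
      unfolding P_def c_def e_def by (rule sum_Sigma_pair) (use finJs finPs in auto)
    finally show ?thesis .
  qed
  have J0Js: "J0 \<in> Js" unfolding J0_def Js_def using kn by auto
  have idPs: "id \<in> Ps" unfolding Ps_def by (simp add: permutes_id)
  have slJ0: "sl J0 ! a = a" if "a < k" for a unfolding J0_def using that by (simp add: sl_lessThan)
  have sR: "\<And>a b. a < b \<Longrightarrow> b < k \<Longrightarrow> sl R ! a < sl R ! b"
    using strict_sl[OF fR Rk] .
  have Esplit: "E J \<sigma> = Nn n * (\<Sum>a<k. sl J ! a) + (\<Sum>a<k. w (sl R ! a) (sl J ! \<sigma> a))"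
    if s: "\<sigma> \<in> Ps" for J \<sigma>
  proof -
    have "(\<Sum>a<k. sl J ! \<sigma> a) = (\<Sum>a<k. sl J ! a)"
      using sum.permute[of \<sigma> "{..<k}" "\<lambda>a. sl J ! a"] s unfolding Ps_def by (simp add: comp_def)
    then show ?thesis unfolding E_def by (simp add: sum.distrib flip: sum_distrib_left)
  qed
  have E0: "E J0 id = Nn n * (\<Sum>a<k. a) + (\<Sum>a<k. w (sl R ! a) a)"
    using Esplit[OF idPs, of J0] slJ0 by simp
  have wbound: "(\<Sum>a<k. w (sl R ! a) a) < Nn n"
  proof -
    have "(\<Sum>a<k. w (sl R ! a) a) \<le> (\<Sum>a<k. n^2)"
    proof (rule sum_mono)
      fix a assume a: "a \<in> {..<k}"
      then have "sl R ! a \<in> R" using sl_mem fR Rk by auto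
      then show "w (sl R ! a) a \<le> n^2" using R a kn by (intro w_le) auto
    qed
    also have "\<dots> = k * n^2" by simp
    also have "\<dots> \<le> n * n^2" using kn by simp
    also have "\<dots> < Nn n" unfolding Nn_def by (simp add: power3_eq_cube power2_eq_square)
    finally show ?thesis .
  qed
  have gt: "E J0 id < E J \<sigma>" if J: "J \<in> Js" and s: "\<sigma> \<in> Ps" and ne: "(J, \<sigma>) \<noteq> (J0, id)" for J \<sigma>
  proof (cases "J = J0")
    case False
    have fJ: "finite J" using J finite_subset unfolding Js_def by auto
    have "(\<Sum>a<k. a) < (\<Sum>a<k. sl J ! a)"
      using sl_sum_gt[OF fJ] J False unfolding Js_def J0_def by auto
    then have "Nn n * (\<Sum>a<k. a) + Nn n \<le> Nn n * (\<Sum>a<k. sl J ! a)"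
      by (metis Suc_le_eq mult_Suc_right mult_le_mono2 add.commute)
    then show ?thesis using E0 Esplit[OF s, of J] wbound by linarith
  next
    case True
    then have sne: "\<sigma> \<noteq> id" using ne by simp
    have s': "\<sigma> permutes {..<k}" using s unfolding Ps_def by simp
    have yy: "\<And>a b. a < b \<Longrightarrow> b < k \<Longrightarrow> (\<lambda>a. a) a < (\<lambda>a::nat. a) b" by simp
    have st: "(\<Sum>a<k. w (sl R ! a) ((\<lambda>a. a) a)) < (\<Sum>a<k. w (sl R ! a) ((\<lambda>a. a) (\<sigma> a)))"
      by (rule w_strict(2)[OF sR yy s' sne])
    have m1: "(\<Sum>a<k. w (sl R ! a) (sl J0 ! \<sigma> a)) = (\<Sum>a<k. w (sl R ! a) (\<sigma> a))"
    proof (intro sum.cong refl)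
      fix a assume "a \<in> {..<k}"
      then have "\<sigma> a < k" using permutes_in_image[OF s', of a] by simp
      then show "w (sl R ! a) (sl J0 ! \<sigma> a) = w (sl R ! a) (\<sigma> a)" using slJ0 by simp
    qed
    have m2: "(\<Sum>a<k. sl J0 ! a) = (\<Sum>a<k. a)"
      using slJ0 by (intro sum.cong refl) simp
    have "E J \<sigma> = Nn n * (\<Sum>a<k. a) + (\<Sum>a<k. w (sl R ! a) (\<sigma> a))"
      using Esplit[OF s, of J0] True m1 m2 by metis
    then show ?thesis using E0 st by simp
  qed
  have lead: "{x\<in>P. e x = E J0 id} = {(J0, id)}"
  proof
    show "{x\<in>P. e x = E J0 id} \<subseteq> {(J0, id)}"
    proof clarify
      fix J \<sigma> assume "(J, \<sigma>) \<in> P" "e (J, \<sigma>) = E J0 id"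
      then show "J = J0 \<and> \<sigma> = id" using gt[of J \<sigma>] unfolding P_def e_def by fastforce
    qed
    show "{(J0, id)} \<subseteq> {x\<in>P. e x = E J0 id}" using J0Js idPs unfolding P_def e_def by auto
  qed
  have cpos: "0 < c (J0, id)"
  proof -
    have "F J0 id = 1" unfolding F_def using slJ0 sl_ge[OF fR] Rk by auto
    moreover have "minor X J0 C = flag_minor X C" unfolding flag_minor_def J0_def k_def ..
    ultimately show ?thesis using fpos C unfolding c_def by simp
  qed
  show ?thesis
    unfolding expand
  proof (rule dominance)
    show "finite P" by (rule finP)
    show "E J0 id \<le> e x" if "x \<in> P" "c x \<noteq> 0" for x
      using gt[of "fst x" "snd x"] that unfolding P_def e_def by (cases x) (auto simp: order_le_less)
    show "0 < (\<Sum>x\<in>{x\<in>P. e x = E J0 id}. c x)" unfolding lead using cpos by simp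
  qed
qed

lemma lowertri_Lm: "lowertri n (Lm n \<epsilon>)"
  unfolding lowertri_def Lm_def by auto

lemma diag_Lm: "0 < \<epsilon> \<Longrightarrow> i < n \<Longrightarrow> Lm n \<epsilon> i i \<noteq> 0"
  unfolding Lm_def by simp

lemma step2:
  assumes fpos: "\<forall>I \<subseteq> {..<n}. 0 < flag_minor X I"
  shows "\<exists>\<epsilon>>0. totally_positive n (mm n (Lm n \<epsilon>) X)"
proof -
  define Q where "Q = {(R,C). R \<subseteq> {..<n} \<and> C \<subseteq> {..<n} \<and> R \<noteq> {} \<and> card R = card C}"
  have finQ: "finite Q"
    by (rule finite_subset[of _ "Pow {..<n} \<times> Pow {..<n}"]) (auto simp: Q_def)
  have ev: "eventually (\<lambda>\<epsilon>. \<forall>x\<in>Q. 0 < minor (mm n (Lm n \<epsilon>) X) (fst x) (snd x)) (at_right 0)"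
    by (rule eventually_ball_finite[OF finQ]) (use step2_minor[OF fpos] in \<open>auto simp: Q_def\<close>)
  obtain \<epsilon> where e: "0 < \<epsilon>" "\<forall>x\<in>Q. 0 < minor (mm n (Lm n \<epsilon>) X) (fst x) (snd x)"
    using eventually_happens'[OF _ eventually_conj[OF eventually_at_right_less ev]] by auto
  have "totally_positive n (mm n (Lm n \<epsilon>) X)"
    unfolding totally_positive_def
  proof (intro allI impI)
    fix R C assume "R \<subseteq> {..<n} \<and> C \<subseteq> {..<n} \<and> R \<noteq> {} \<and> card R = card C"
    then have "(R, C) \<in> Q" unfolding Q_def by auto
    then show "0 < minor (mm n (Lm n \<epsilon>) X) R C" using e(2) by fastforce
  qed
  then show ?thesis using e(1) by blast
qed

theorem mainTheorem1:
  fixes n :: nat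
  assumes "n \<ge> 1"
  shows "Fl_nonneg n =
    {F \<in> Fl n. \<exists>M \<in> GLn n. flag_of n M = F \<and> (\<forall>I \<subseteq> {..<n}. flag_minor M I \<ge> 0)}"
proof -
  define P where "P = (\<lambda>U. U \<subseteq> Fl n \<and> openin (top_of_set (GLn n)) {M \<in> GLn n. flag_of n M \<in> U})"
  have istop: "istopology P"
    unfolding istopology_def
  proof (intro conjI allI impI)
    fix S T assume S: "P S" and T: "P T"
    have "{M \<in> GLn n. flag_of n M \<in> S \<inter> T} = {M \<in> GLn n. flag_of n M \<in> S} \<inter> {M \<in> GLn n. flag_of n M \<in> T}"
      by auto
    then show "P (S \<inter> T)" using S T unfolding P_def by (auto intro: openin_Int)
  next
    fix K assume K: "\<forall>S\<in>K. P S"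
    have "{M \<in> GLn n. flag_of n M \<in> \<Union>K} = \<Union>((\<lambda>S. {M \<in> GLn n. flag_of n M \<in> S}) ` K)"
      by auto
    moreover have "openin (top_of_set (GLn n)) (\<Union>((\<lambda>S. {M \<in> GLn n. flag_of n M \<in> S}) ` K))"
      using K unfolding P_def by (intro openin_Union) auto
    ultimately show "P (\<Union>K)" using K unfolding P_def by auto
  qed
  have op: "openin (Fl_topology n) = P"
    unfolding Fl_topology_def P_def[symmetric] using istop by simp
  have flagFl: "flag_of n M \<in> Fl n" if "M \<in> GLn n" for M
    using that unfolding Fl_def by auto
  have PFl: "P (Fl n)"
  proof -
    have "{M \<in> GLn n. flag_of n M \<in> Fl n} = GLn n \<inter> UNIV" using flagFl by auto
    then show ?thesis unfolding P_def openin_open by auto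
  qed
  have top: "topspace (Fl_topology n) = Fl n"
    unfolding topspace_def op using PFl unfolding P_def by auto
  have "Fl_nonneg n = Sset n"
  proof
    show "Fl_nonneg n \<subseteq> Sset n"
    proof
      fix F assume F: "F \<in> Fl_nonneg n"
      then have Ftop: "F \<in> Fl n" and cl: "\<And>T. F \<in> T \<Longrightarrow> P T \<Longrightarrow> \<exists>y. y \<in> Fl_pos n \<and> y \<in> T"
        unfolding Fl_nonneg_def in_closure_of top op by auto
      show "F \<in> Sset n"
      proof (rule ccontr)
        assume nS: "F \<notin> Sset n"
        have "P (Fl n - Sset n)"
        proof -
          have "{M \<in> GLn n. flag_of n M \<in> Fl n - Sset n} = GLn n \<inter> (- Csign n)"
            using pre_char flagFl by auto
          moreover have "open (- Csign n)" using Csign_closed by (simp add: open_Compl)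
          ultimately show ?thesis unfolding P_def openin_open by auto
        qed
        then obtain y where "y \<in> Fl_pos n" "y \<in> Fl n - Sset n"
          using cl[of "Fl n - Sset n"] Ftop nS by auto
        then show False using Fl_pos_sub by auto
      qed
    qed
    show "Sset n \<subseteq> Fl_nonneg n"
    proof
      fix F assume F: "F \<in> Sset n"
      then obtain M where M: "M \<in> GLn n" "flag_of n M = F" "\<forall>I \<subseteq> {..<n}. 0 \<le> flag_minor M I"
        unfolding Sset_def by auto
      have FFl: "F \<in> Fl n" using F unfolding Sset_def by auto
      have "\<exists>y. y \<in> Fl_pos n \<and> y \<in> T" if FT: "F \<in> T" and PT: "P T" for T
      proof -
        have "openin (top_of_set (GLn n)) {M \<in> GLn n. flag_of n M \<in> T}" using PT unfolding P_def by auto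
        then obtain U0 where U0: "open U0" "{M \<in> GLn n. flag_of n M \<in> T} = GLn n \<inter> U0"
          unfolding openin_open by auto
        have MU: "M \<in> U0" using U0(2) M FT by auto
        obtain X where X: "X \<in> U0" "X \<in> sqmats n" "\<forall>I \<subseteq> {..<n}. 0 < flag_minor X I"
          using step1[OF M(1) M(3) U0(1) MU] by auto
        have "detk n X \<noteq> 0" using X(3) flag_minor_full[of X n] by force
        then have XG: "X \<in> GLn n" using X(2) unfolding GLn_def by auto
        then have XT: "flag_of n X \<in> T" using U0(2) X(1) by auto
        obtain \<epsilon> where e: "0 < \<epsilon>" "totally_positive n (mm n (Lm n \<epsilon>) X)"
          using step2[OF X(3)] by auto
        define Y where "Y = mm n (Lm n \<epsilon>) X"
        have Ysq: "Y \<in> sqmats n"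
          unfolding sqmats_def Y_def mm_def Lm_def using sqmatsD[OF X(2)] by auto
        have "(0::nat) \<in> {..<n}" using assms by simp
        then have "{..<n} \<noteq> {}" by blast
        then have "0 < minor Y {..<n} {..<n}" using e(2) unfolding totally_positive_def Y_def by auto
        then have "detk n Y \<noteq> 0" using flag_minor_full[of Y n] unfolding flag_minor_def by simp
        then have YG: "Y \<in> GLn n" using Ysq unfolding GLn_def by auto
        have "flag_of n Y = flag_of n X"
          unfolding Y_def by (rule flag_eq[OF lowertri_Lm diag_Lm[OF e(1)]])
        moreover have "flag_of n Y \<in> Fl_pos n" unfolding Fl_pos_def using YG e(2) Y_def by auto
        ultimately show ?thesis using XT by auto
      qed
      then show "F \<in> Fl_nonneg n"
        unfolding Fl_nonneg_def in_closure_of top op using FFl by auto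
    qed
  qed
  then show ?thesis unfolding Sset_def .
qed


end
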